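(* Assume the finite-sum setting, that $f$ is $L$-smooth, and that $\tilde\nabla_K$ satisfies the strong growth condition with constant $\rho_K\ge1$. Let $(x_n)$ be generated by SNAG with batch size $K$ and let $\varepsilon>0$. (i) If $f$ is convex with minimizer $x^\ast$, and $s=\frac{1}{L\rho_K}$, $\eta_n=\frac{1}{L\rho_K^2}\frac{n+1}{2}$, $\beta=1$, $\alpha_n=\frac{n^2/(n+1)}{2+n^2/(n+1)}$, then $\mathbb{E}[f(x_n)-f^\ast]\le\varepsilon$ for every $n\ge\rho_K\sqrt{\frac{2L}{\varepsilon}}\|x_0-x^\ast\|$. (ii) If $f$ is $\mu$-strongly convex and $s=\frac{1}{L\rho_K}$, $\eta_n=\eta=\frac{1}{\rho_K\sqrt{\mu L}}$, $\beta=1-\frac{1}{\rho_K}\sqrt{\frac\mu L}$, $\alpha_n=\alpha=\frac{1}{1+\frac{1}{\rho_K}\sqrt{\mu/L}}$, then $\mathbb{E}[f(x_n)-f^\ast]\le\varepsilon$ for every $n\ge\rho_K\sqrt{\frac L\mu}\log\!\left(\frac{2(f(x_0)-f^\ast)}{\varepsilon}\right)$.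
   Context: Finite-sum setting: $N\ge2$, $f_i:\mathbb{R}^d\to\mathbb{R}$ continuously differentiable, $f=\frac1N\sum_i f_i$, $f^\ast=\min f$ (attained). $f$ is $L$-smooth if $\nabla f$ is $L$-Lipschitz. For $K\in\{1,\dots,N\}$, $B$ is a uniformly random subset of $\{1,\dots,N\}$ of size $K$ and $\tilde\nabla_K(x)=\frac1K\sum_{i\in B}\nabla f_i(x)$. Strong growth condition (SGC) with constant $\rho_K\ge1$: $\mathbb{E}\|\tilde\nabla_K(x)\|^2\le\rho_K\|\nabla f(x)\|^2$ for all $x$. SNAG: given $x_0=z_0\in\mathbb{R}^d$, $s>0$, $\beta\in[0,1]$, $\alpha_n\in[0,1]$, $\eta_n\ge0$, iterate $y_n=\alpha_nx_n+(1-\alpha_n)z_n$, $x_{n+1}=y_n-s\tilde\nabla_K(y_n)$, $z_{n+1}=\beta z_n+(1-\beta)y_n-\eta_n\tilde\nabla_K(y_n)$, where the same batch is used in both updates of iteration $n$ and batches are independent across iterations. *)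

theory Defs
  imports "HOL-Analysis.Analysis" "HOL-Probability.Probability"
begin

definition batches :: "nat \<Rightarrow> nat \<Rightarrow> nat set set" where
  "batches N K = {B. B \<subseteq> {..<N} \<and> card B = K}"

text \<open>Full objective and its gradient (g i is the gradient of f_i).\<close>
definition favg :: "nat \<Rightarrow> (nat \<Rightarrow> 'a \<Rightarrow> real) \<Rightarrow> 'a \<Rightarrow> real" where
  "favg N fs x = (1 / real N) * (\<Sum>i<N. fs i x)"

definition gavg :: "nat \<Rightarrow> (nat \<Rightarrow> 'a \<Rightarrow> 'a::real_vector) \<Rightarrow> 'a \<Rightarrow> 'a" where
  "gavg N g x = (1 / real N) *\<^sub>R (\<Sum>i<N. g i x)"

definition sgrad :: "nat \<Rightarrow> (nat \<Rightarrow> 'a \<Rightarrow> 'a::real_vector) \<Rightarrow> nat set \<Rightarrow> 'a \<Rightarrow> 'a" where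
  "sgrad K g B x = (1 / real K) *\<^sub>R (\<Sum>i\<in>B. g i x)"

definition snag_step ::
  "nat \<Rightarrow> (nat \<Rightarrow> 'a \<Rightarrow> 'a::real_vector) \<Rightarrow> real \<Rightarrow> real \<Rightarrow> (nat \<Rightarrow> real) \<Rightarrow> (nat \<Rightarrow> real)
     \<Rightarrow> nat \<Rightarrow> 'a \<times> 'a \<Rightarrow> nat set \<Rightarrow> 'a \<times> 'a" where
  "snag_step K g s \<beta> \<alpha> \<eta> n st B =
     (let x = fst st; z = snd st;
          y = \<alpha> n *\<^sub>R x + (1 - \<alpha> n) *\<^sub>R z;
          v = sgrad K g B y
      in (y - s *\<^sub>R v, \<beta> *\<^sub>R z + (1 - \<beta>) *\<^sub>R y - \<eta> n *\<^sub>R v))"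

text \<open>Distribution of the state (x_n, z_n) of SNAG: batches drawn uniformly
  among K-subsets, independently across iterations.\<close>
fun snag_pmf ::
  "nat \<Rightarrow> nat \<Rightarrow> (nat \<Rightarrow> 'a \<Rightarrow> 'a::real_vector) \<Rightarrow> real \<Rightarrow> real \<Rightarrow> (nat \<Rightarrow> real) \<Rightarrow> (nat \<Rightarrow> real)
     \<Rightarrow> 'a \<Rightarrow> nat \<Rightarrow> ('a \<times> 'a) pmf" where
  "snag_pmf N K g s \<beta> \<alpha> \<eta> x0 0 = return_pmf (x0, x0)"
| "snag_pmf N K g s \<beta> \<alpha> \<eta> x0 (Suc n) =
     bind_pmf (snag_pmf N K g s \<beta> \<alpha> \<eta> x0 n)
       (\<lambda>st. map_pmf (snag_step K g s \<beta> \<alpha> \<eta> n st) (pmf_of_set (batches N K)))"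

definition strongly_convex :: "real \<Rightarrow> ('a::real_normed_vector \<Rightarrow> real) \<Rightarrow> bool" where
  "strongly_convex \<mu> f \<longleftrightarrow> (\<forall>x y t. 0 \<le> t \<and> t \<le> 1 \<longrightarrow>
     f (t *\<^sub>R x + (1 - t) *\<^sub>R y) \<le> t * f x + (1 - t) * f y - \<mu> / 2 * t * (1 - t) * (norm (x - y))\<^sup>2)"

end

theory Submission
  imports Defs
begin


lemma descent:
  fixes F :: "'a::real_inner \<Rightarrow> real"
  assumes D: "\<And>x. (F has_derivative (\<lambda>h. G x \<bullet> h)) (at x)"
    and Lip: "\<And>x y. norm (G x - G y) \<le> L * norm (x - y)"
  shows "F (y + h) \<le> F y + G y \<bullet> h + L/2 * (norm h)^2"
proof -
  define \<psi> where "\<psi> t = F (y + t *\<^sub>R h) - t * (G y \<bullet> h) - L/2 * t^2 * (norm h)^2" for t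
  have der: "DERIV \<psi> t :> (G (y + t *\<^sub>R h) \<bullet> h - G y \<bullet> h - L * t * (norm h)^2)" for t
  proof -
    have d1: "((\<lambda>u. y + u *\<^sub>R h) has_derivative (\<lambda>u. u *\<^sub>R h)) (at t)"
      by (auto intro!: derivative_eq_intros)
    have "((\<lambda>u. F (y + u *\<^sub>R h)) has_derivative (\<lambda>u. G (y + t *\<^sub>R h) \<bullet> (u *\<^sub>R h))) (at t)"
      using has_derivative_compose[OF d1 D] .
    moreover have "(\<lambda>u. G (y + t *\<^sub>R h) \<bullet> (u *\<^sub>R h)) = (*) (G (y + t *\<^sub>R h) \<bullet> h)"
      by (simp add: fun_eq_iff)
    ultimately have "((\<lambda>u. F (y + u *\<^sub>R h)) has_field_derivative (G (y + t *\<^sub>R h) \<bullet> h)) (at t)"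
      unfolding has_field_derivative_def by simp
    then show ?thesis unfolding \<psi>_def
      by (auto intro!: derivative_eq_intros)
  qed
  have "\<psi> 1 \<le> \<psi> 0"
  proof (rule DERIV_nonpos_imp_nonincreasing[of 0 1 \<psi>])
    fix t :: real assume t: "0 \<le> t" "t \<le> 1"
    have "(G (y + t *\<^sub>R h) - G y) \<bullet> h \<le> norm (G (y + t *\<^sub>R h) - G y) * norm h"
      by (rule norm_cauchy_schwarz)
    also have "\<dots> \<le> (L * norm (t *\<^sub>R h)) * norm h"
      using Lip[of "y + t *\<^sub>R h" y] by (intro mult_right_mono) auto
    also have "\<dots> = L * t * (norm h)^2" using t by (simp add: power2_eq_square)
    finally have "G (y + t *\<^sub>R h) \<bullet> h - G y \<bullet> h - L * t * (norm h)^2 \<le> 0"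
      by (simp add: inner_diff_left)
    then show "\<exists>d. DERIV \<psi> t :> d \<and> d \<le> 0" using der by blast
  qed simp
  then show ?thesis unfolding \<psi>_def by simp
qed

lemma convex_tangent:
  fixes F :: "'a::real_inner \<Rightarrow> real"
  assumes C: "convex_on UNIV F"
    and D: "\<And>x. (F has_derivative (\<lambda>h. G x \<bullet> h)) (at x)"
  shows "F x \<ge> F y + G y \<bullet> (x - y)"
proof -
  define \<phi> where "\<phi> t = F (y + t *\<^sub>R (x - y))" for t
  have cv: "convex_on UNIV \<phi>"
  proof (rule convex_onI)
    fix t a b :: real assume t: "0 < t" "t < 1"
    have "y + ((1 - t) * a + t * b) *\<^sub>R (x - y) = (1 - t) *\<^sub>R (y + a *\<^sub>R (x - y)) + t *\<^sub>R (y + b *\<^sub>R (x - y))"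
      by (simp add: algebra_simps)
    then show "\<phi> ((1 - t) *\<^sub>R a + t *\<^sub>R b) \<le> (1 - t) * \<phi> a + t * \<phi> b"
      unfolding \<phi>_def using convex_onD[OF C, of t] t by simp
  qed simp
  have d1: "((\<lambda>u. y + u *\<^sub>R (x - y)) has_derivative (\<lambda>u. u *\<^sub>R (x - y))) (at 0)"
    by (auto intro!: derivative_eq_intros)
  have "(\<phi> has_derivative (\<lambda>u. G (y + 0 *\<^sub>R (x - y)) \<bullet> (u *\<^sub>R (x - y)))) (at 0)"
    unfolding \<phi>_def using has_derivative_compose[OF d1 D] .
  moreover have "(\<lambda>u. G (y + 0 *\<^sub>R (x - y)) \<bullet> (u *\<^sub>R (x - y))) = (*) (G y \<bullet> (x - y))"
    by (simp add: fun_eq_iff)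
  ultimately have "(\<phi> has_field_derivative (G y \<bullet> (x - y))) (at 0 within UNIV)"
    unfolding has_field_derivative_def by simp
  from convex_on_imp_above_tangent[OF cv _ _ _ this, of 1] 
  have "\<phi> 1 - \<phi> 0 \<ge> G y \<bullet> (x - y)" by simp
  then show ?thesis unfolding \<phi>_def by simp
qed

lemma norm_conv_identity:
  fixes x y :: "'a::real_inner"
  shows "(norm ((1 - t) *\<^sub>R x + t *\<^sub>R y))^2 = (1 - t) * (norm x)^2 + t * (norm y)^2 - t * (1 - t) * (norm (x - y))^2"
  unfolding power2_norm_eq_inner
  by (simp add: inner_add_left inner_add_right inner_diff_left inner_diff_right
      inner_commute algebra_simps)

lemma sc_tangent:
  fixes F :: "'a::real_inner \<Rightarrow> real"
  assumes C: "strongly_convex \<mu> F"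
    and D: "\<And>x. (F has_derivative (\<lambda>h. G x \<bullet> h)) (at x)"
  shows "F x \<ge> F y + G y \<bullet> (x - y) + \<mu>/2 * (norm (x - y))^2"
proof -
  define H where "H x = F x - \<mu>/2 * (x \<bullet> x)" for x
  have HC: "convex_on UNIV H"
  proof (rule convex_onI)
    fix t :: real and a b :: 'a assume t: "0 < t" "t < 1"
    have "F (t *\<^sub>R b + (1 - t) *\<^sub>R a) \<le> t * F b + (1 - t) * F a - \<mu> / 2 * t * (1 - t) * (norm (b - a))\<^sup>2"
      using C t unfolding strongly_convex_def by auto
    moreover have "(1 - t) *\<^sub>R a + t *\<^sub>R b = t *\<^sub>R b + (1 - t) *\<^sub>R a" by (simp add: add.commute)
    ultimately have prev: "F ((1 - t) *\<^sub>R a + t *\<^sub>R b) \<le> (1-t) * F a + t * F b - \<mu>/2 * (1-t) * t * (norm (a - b))^2"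
      by (simp add: norm_minus_commute algebra_simps)
    show "H ((1 - t) *\<^sub>R a + t *\<^sub>R b) \<le> (1 - t) * H a + t * H b"
    proof -
      have e: "\<mu>/2 * (norm ((1 - t) *\<^sub>R a + t *\<^sub>R b))^2 = \<mu>/2 * ((1 - t) * (norm a)^2 + t * (norm b)^2 - t * (1 - t) * (norm (a - b))^2)"
        using norm_conv_identity[of t a b] by simp
      have "H ((1 - t) *\<^sub>R a + t *\<^sub>R b) = F ((1 - t) *\<^sub>R a + t *\<^sub>R b) - \<mu>/2 * (norm ((1 - t) *\<^sub>R a + t *\<^sub>R b))^2"
        "H a = F a - \<mu>/2 * (norm a)^2" "H b = F b - \<mu>/2 * (norm b)^2"
        unfolding H_def by (simp_all add: power2_norm_eq_inner)
      then show ?thesis using prev e by (simp only:) (simp add: algebra_simps add_divide_distrib diff_divide_distrib)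
    qed
  qed simp
  have HD: "(H has_derivative (\<lambda>h. (G x - \<mu> *\<^sub>R x) \<bullet> h)) (at x)" for x
  proof -
    have "(H has_derivative (\<lambda>h. G x \<bullet> h - \<mu>/2 * (h \<bullet> x + x \<bullet> h))) (at x)"
      unfolding H_def by (auto intro!: derivative_eq_intros D)
    moreover have "(\<lambda>h. G x \<bullet> h - \<mu>/2 * (h \<bullet> x + x \<bullet> h)) = (\<lambda>h. (G x - \<mu> *\<^sub>R x) \<bullet> h)"
      by (rule ext) (simp add: inner_diff_left inner_diff_right inner_commute algebra_simps)
    ultimately show ?thesis by simp
  qed
  have "H x \<ge> H y + (G y - \<mu> *\<^sub>R y) \<bullet> (x - y)" by (rule convex_tangent[OF HC HD])
  then show ?thesis unfolding H_def
    by (simp add: power2_norm_eq_inner inner_diff_left inner_diff_right inner_commute algebra_simps)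
qed



lemma batches_finite: "finite (batches N K)"
  unfolding batches_def by (rule finite_subset[of _ "Pow {..<N}"]) auto

lemma batches_card: "card (batches N K) = N choose K"
  unfolding batches_def using n_subsets[of "{..<N}" K] by simp

lemma batches_ne: assumes "K \<le> N" shows "batches N K \<noteq> {}"
  using batches_card[of N K] assms batches_finite[of N K] by auto

lemma card_batches_with:
  assumes i: "i < N" and K: "1 \<le> K"
  shows "card {B \<in> batches N K. i \<in> B} = (N - 1) choose (K - 1)"
proof -
  let ?C = "{C. C \<subseteq> {..<N} - {i} \<and> card C = K - 1}"
  have eq: "{B \<in> batches N K. i \<in> B} = insert i ` ?C"
  proof (intro equalityI subsetI)
    fix B assume "B \<in> {B \<in> batches N K. i \<in> B}"
    then have B: "B \<subseteq> {..<N}" "card B = K" "i \<in> B" unfolding batches_def by auto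
    have "finite B" using B(1) finite_subset by blast
    then have "B - {i} \<in> ?C" using B by auto
    moreover have "B = insert i (B - {i})" using B by auto
    ultimately show "B \<in> insert i ` ?C" by blast
  next
    fix B assume "B \<in> insert i ` ?C"
    then obtain C where C: "C \<subseteq> {..<N} - {i}" "card C = K - 1" "B = insert i C" by auto
    have "finite C" using C(1) finite_subset by blast
    moreover have "i \<notin> C" using C(1) by auto
    ultimately have "card B = K" using C K by simp
    then show "B \<in> {B \<in> batches N K. i \<in> B}" using C i unfolding batches_def by auto
  qed
  have inj: "inj_on (insert i) ?C"
    by (rule inj_onI) (metis Diff_iff insert_ident mem_Collect_eq singletonI subsetD)
  have "card {B \<in> batches N K. i \<in> B} = card ?C" unfolding eq by (rule card_image[OF inj])
  also have "\<dots> = card ({..<N} - {i}) choose (K - 1)" by (rule n_subsets) simp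
  also have "card ({..<N} - {i}) = N - 1" using i by simp
  finally show ?thesis .
qed

lemma sum_sgrad:
  fixes g :: "nat \<Rightarrow> 'a \<Rightarrow> 'a::real_vector"
  assumes K: "1 \<le> K" "K \<le> N"
  shows "(\<Sum>B\<in>batches N K. sgrad K g B y) = real (card (batches N K)) *\<^sub>R gavg N g y"
proof -
  let ?S = "batches N K"
  have fin: "finite ?S" by (rule batches_finite)
  have "(\<Sum>B\<in>?S. (\<Sum>i\<in>B. g i y)) = (\<Sum>B\<in>?S. \<Sum>i<N. if i \<in> B then g i y else 0)"
  proof (rule sum.cong[OF refl])
    fix B assume "B \<in> ?S"
    then have "B \<subseteq> {..<N}" unfolding batches_def by auto
    then have "{x \<in> {..<N}. x \<in> B} = B" by auto
    then show "(\<Sum>i\<in>B. g i y) = (\<Sum>i<N. if i \<in> B then g i y else 0)"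
      using sum.inter_filter[of "{..<N}" "\<lambda>i. g i y" "\<lambda>i. i \<in> B"] by simp
  qed
  also have "\<dots> = (\<Sum>i<N. \<Sum>B\<in>?S. if i \<in> B then g i y else 0)" by (rule sum.swap)
  also have "\<dots> = (\<Sum>i<N. real ((N - 1) choose (K - 1)) *\<^sub>R g i y)"
  proof (rule sum.cong[OF refl])
    fix i assume "i \<in> {..<N}"
    then have "(\<Sum>B\<in>?S. if i \<in> B then g i y else 0) = (\<Sum>B\<in>{B\<in>?S. i \<in> B}. g i y)"
      using sum.inter_filter[OF fin, of "\<lambda>B. g i y" "\<lambda>B. i \<in> B"] by simp
    also have "\<dots> = real ((N - 1) choose (K - 1)) *\<^sub>R g i y"
      using card_batches_with[of i N K] K \<open>i \<in> {..<N}\<close> by (simp add: sum_constant_scaleR del: One_nat_def)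
    finally show "(\<Sum>B\<in>?S. if i \<in> B then g i y else 0) = real ((N - 1) choose (K - 1)) *\<^sub>R g i y" .
  qed
  finally have s: "(\<Sum>B\<in>?S. (\<Sum>i\<in>B. g i y)) = real ((N - 1) choose (K - 1)) *\<^sub>R (\<Sum>i<N. g i y)"
    by (simp add: scaleR_sum_right)
  have bin: "real K * real (N choose K) = real N * real ((N - 1) choose (K - 1))"
    using times_binomial_minus1_eq[of K N] K by (metis of_nat_mult less_le_trans zero_less_one le_less)
  have "(\<Sum>B\<in>?S. sgrad K g B y) = (1 / real K) *\<^sub>R (\<Sum>B\<in>?S. (\<Sum>i\<in>B. g i y))"
    unfolding sgrad_def by (simp add: scaleR_sum_right)
  also have "\<dots> = ((1 / real K) * real ((N - 1) choose (K - 1))) *\<^sub>R (\<Sum>i<N. g i y)"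
    unfolding s by simp
  also have "(1 / real K) * real ((N - 1) choose (K - 1)) = real (N choose K) * (1 / real N)"
    using bin K by (simp add: field_simps)
  finally show ?thesis unfolding gavg_def batches_card by simp
qed



lemma integral_bind_nonneg:
  fixes f :: "'b \<Rightarrow> real"
  assumes fM: "finite (set_pmf M)" and fN: "\<And>x. finite (set_pmf (N x))" and nn: "\<And>x. 0 \<le> f x"
  shows "measure_pmf.expectation (bind_pmf M N) f = measure_pmf.expectation M (\<lambda>x. measure_pmf.expectation (N x) f)"
proof -
  have fin: "finite (set_pmf (bind_pmf M N))" using fM fN by simp
  have "ennreal (measure_pmf.expectation (bind_pmf M N) f) = (\<integral>\<^sup>+x. f x \<partial>bind_pmf M N)"
    by (rule nn_integral_eq_integral[symmetric]) (auto intro: integrable_measure_pmf_finite[OF fin] nn)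
  also have "\<dots> = (\<integral>\<^sup>+x. \<integral>\<^sup>+y. f y \<partial>N x \<partial>M)" by simp
  also have "\<dots> = (\<integral>\<^sup>+x. ennreal (measure_pmf.expectation (N x) f) \<partial>M)"
    by (rule nn_integral_cong, rule nn_integral_eq_integral)
       (auto intro: integrable_measure_pmf_finite[OF fN] nn)
  also have "\<dots> = ennreal (measure_pmf.expectation M (\<lambda>x. measure_pmf.expectation (N x) f))"
    by (rule nn_integral_eq_integral) (auto intro!: integrable_measure_pmf_finite[OF fM] AE_I2 Bochner_Integration.integral_nonneg nn)
  finally show ?thesis
    by (subst (asm) ennreal_inj) (auto intro: Bochner_Integration.integral_nonneg nn)
qed

lemma iter_bound:
  fixes P :: "nat \<Rightarrow> 's pmf" and V :: "nat \<Rightarrow> 's \<Rightarrow> real"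
  assumes P0: "P 0 = return_pmf s0"
  and PS: "\<And>n. P (Suc n) = bind_pmf (P n) (\<lambda>st. map_pmf (step n st) Q)"
  and Qfin: "finite (set_pmf Q)"
  and Vnn: "\<And>n st. 0 \<le> V n st"
  and dec: "\<And>n st. measure_pmf.expectation Q (\<lambda>B. V (Suc n) (step n st B)) \<le> r * V n st"
  and r: "0 \<le> r"
  shows "finite (set_pmf (P n)) \<and> measure_pmf.expectation (P n) (V n) \<le> r^n * V 0 s0"
proof (induction n)
  case 0
  then show ?case using P0 by simp
next
  case (Suc n)
  have fin: "finite (set_pmf (P n))" using Suc by blast
  have fN: "finite (set_pmf (map_pmf (step n st) Q))" for st using Qfin by simp
  have fin': "finite (set_pmf (P (Suc n)))" unfolding PS using fin Qfin by simp
  have "measure_pmf.expectation (P (Suc n)) (V (Suc n))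
      = measure_pmf.expectation (P n) (\<lambda>st. measure_pmf.expectation Q (\<lambda>B. V (Suc n) (step n st B)))"
    unfolding PS by (subst integral_bind_nonneg[OF fin fN Vnn]) simp
  also have "\<dots> \<le> measure_pmf.expectation (P n) (\<lambda>st. r * V n st)"
    by (rule integral_mono) (auto intro: integrable_measure_pmf_finite[OF fin] dec)
  also have "\<dots> = r * measure_pmf.expectation (P n) (V n)" by simp
  also have "\<dots> \<le> r * (r^n * V 0 s0)" using Suc r by (intro mult_left_mono) auto
  finally show ?case using fin' by simp
qed



lemma step_avg:
  fixes g :: "nat \<Rightarrow> 'a \<Rightarrow> 'a::real_inner" and F :: "'a \<Rightarrow> real"
  assumes K: "1 \<le> K" "K \<le> N"
    and D: "\<And>x. (F has_derivative (\<lambda>h. gavg N g x \<bullet> h)) (at x)"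
    and Lip: "\<And>x y. norm (gavg N g x - gavg N g y) \<le> L * norm (x - y)"
    and Lpos: "L \<ge> 0"
    and SGC: "measure_pmf.expectation (pmf_of_set (batches N K)) (\<lambda>B. (norm (sgrad K g B y))\<^sup>2)
                  \<le> \<rho> * (norm (gavg N g y))\<^sup>2"
  shows "measure_pmf.expectation (pmf_of_set (batches N K)) (\<lambda>B. F (y - s *\<^sub>R sgrad K g B y))
           \<le> F y - s * (norm (gavg N g y))^2 + L/2 * s^2 * \<rho> * (norm (gavg N g y))^2"
    and "measure_pmf.expectation (pmf_of_set (batches N K)) (\<lambda>B. (norm (w - \<eta> *\<^sub>R sgrad K g B y - p))^2)
           \<le> (norm (w - p))^2 - 2 * \<eta> * ((w - p) \<bullet> gavg N g y) + \<eta>^2 * \<rho> * (norm (gavg N g y))^2"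
proof -
  let ?S = "batches N K"
  let ?G = "gavg N g y"
  let ?v = "\<lambda>B. sgrad K g B y"
  have fin: "finite ?S" by (rule batches_finite)
  have ne: "?S \<noteq> {}" using K by (intro batches_ne) auto
  have cpos: "real (card ?S) > 0" using fin ne by (simp add: card_gt_0_iff)
  note E = integral_pmf_of_set[OF ne fin]
  have sv: "(\<Sum>B\<in>?S. ?v B) = real (card ?S) *\<^sub>R ?G" using sum_sgrad[OF K] .
  have sq: "(\<Sum>B\<in>?S. (norm (?v B))^2) \<le> real (card ?S) * (\<rho> * (norm ?G)^2)"
    using SGC unfolding E using cpos by (simp add: field_simps)
  have sinner: "(\<Sum>B\<in>?S. u \<bullet> ?v B) = real (card ?S) * (u \<bullet> ?G)" for u
    using sv by (simp add: inner_sum_right[symmetric])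
  have "(\<Sum>B\<in>?S. F (y - s *\<^sub>R ?v B)) \<le> (\<Sum>B\<in>?S. F y - s * (?G \<bullet> ?v B) + L/2 * s^2 * (norm (?v B))^2)"
  proof (rule sum_mono)
    fix B
    have "F (y + (- s *\<^sub>R ?v B)) \<le> F y + ?G \<bullet> (- s *\<^sub>R ?v B) + L/2 * (norm (- s *\<^sub>R ?v B))^2"
      by (rule descent[OF D Lip])
    then show "F (y - s *\<^sub>R ?v B) \<le> F y - s * (?G \<bullet> ?v B) + L/2 * s^2 * (norm (?v B))^2"
      by (simp add: power_mult_distrib)
  qed
  also have "\<dots> = real (card ?S) * F y - s * (real (card ?S) * (?G \<bullet> ?G)) + L/2 * s^2 * (\<Sum>B\<in>?S. (norm (?v B))^2)"
    by (simp add: sum.distrib sum_subtractf sum_distrib_left[symmetric] sinner sum_divide_distrib[symmetric])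
  also have "\<dots> \<le> real (card ?S) * F y - s * (real (card ?S) * (?G \<bullet> ?G)) + L/2 * s^2 * (real (card ?S) * (\<rho> * (norm ?G)^2))"
    using sq Lpos by (intro add_left_mono mult_left_mono) auto
  finally show "measure_pmf.expectation (pmf_of_set ?S) (\<lambda>B. F (y - s *\<^sub>R ?v B))
           \<le> F y - s * (norm ?G)^2 + L/2 * s^2 * \<rho> * (norm ?G)^2"
    unfolding E using cpos by (simp add: field_simps power2_norm_eq_inner)
  have "(\<Sum>B\<in>?S. (norm (w - \<eta> *\<^sub>R ?v B - p))^2) = (\<Sum>B\<in>?S. (norm (w - p))^2 - 2 * \<eta> * ((w - p) \<bullet> ?v B) + \<eta>^2 * (norm (?v B))^2)"
  proof (rule sum.cong[OF refl])
    fix B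
    have "w - \<eta> *\<^sub>R ?v B - p = (w - p) - \<eta> *\<^sub>R ?v B" by simp
    then show "(norm (w - \<eta> *\<^sub>R ?v B - p))^2 = (norm (w - p))^2 - 2 * \<eta> * ((w - p) \<bullet> ?v B) + \<eta>^2 * (norm (?v B))^2"
      unfolding power2_norm_eq_inner
      by (simp add: inner_diff_left inner_diff_right inner_commute algebra_simps power2_eq_square)
  qed
  also have "\<dots> = real (card ?S) * (norm (w - p))^2 - 2 * \<eta> * (real (card ?S) * ((w - p) \<bullet> ?G)) + \<eta>^2 * (\<Sum>B\<in>?S. (norm (?v B))^2)"
    by (simp add: sum.distrib sum_subtractf sum_distrib_left[symmetric] sinner)
  also have "\<dots> \<le> real (card ?S) * (norm (w - p))^2 - 2 * \<eta> * (real (card ?S) * ((w - p) \<bullet> ?G)) + \<eta>^2 * (real (card ?S) * (\<rho> * (norm ?G)^2))"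
    using sq by (intro add_left_mono mult_left_mono) auto
  finally show "measure_pmf.expectation (pmf_of_set ?S) (\<lambda>B. (norm (w - \<eta> *\<^sub>R ?v B - p))^2)
           \<le> (norm (w - p))^2 - 2 * \<eta> * ((w - p) \<bullet> ?G) + \<eta>^2 * \<rho> * (norm ?G)^2"
    unfolding E using cpos by (simp add: field_simps)
qed



lemma alg1:
  fixes EF E2 Fy Fx f ss L \<rho> a2 Z et c P1 P2 A A' :: real
  assumes "EF \<le> Fy - ss*a2 + L/2* ss^2*\<rho>*a2" "E2 \<le> Z - 2*et*(c*P1+P2) + et ^ 2*\<rho>*a2"
    "P2 \<ge> Fy - f" "P1 \<ge> Fy - Fx" "Fy \<ge> f" "A' \<ge> 0" "et \<ge> 0" "c \<ge> 0"
    "A'*(ss - L/2* ss^2*\<rho>) = et ^ 2*\<rho>/2" "et*c = A" "A' \<le> et + et*c"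
  shows "A'*(EF - f) + 1/2*E2 \<le> A*(Fx - f) + 1/2*Z"
proof -
  have 1: "A'*EF \<le> A'*(Fy - ss*a2 + L/2* ss^2*\<rho>*a2)" using assms by (intro mult_left_mono) auto
  have 2: "(et*c)*P1 \<ge> (et*c)*(Fy - Fx)" using assms by (intro mult_left_mono) auto
  have 3: "et*P2 \<ge> et*(Fy - f)" using assms by (intro mult_left_mono) auto
  have 4: "(A' - et - et*c)*(Fy - f) \<le> 0" using assms by (intro mult_nonpos_nonneg) auto
  have 5: "A'*(Fy - ss*a2 + L/2* ss^2*\<rho>*a2) = A'*Fy - et ^ 2*\<rho>/2*a2"
  proof -
    have "A'*(Fy - ss*a2 + L/2* ss^2*\<rho>*a2) = A'*Fy - (A'*(ss - L/2* ss^2*\<rho>))*a2"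
      by (simp add: algebra_simps)
    then show ?thesis using assms(9) by (simp only:)
  qed
  have f1: "A'*EF \<le> A'*Fy - et ^ 2*\<rho>/2*a2" using 1 unfolding 5 .
  have f1': "et ^ 2*\<rho>/2*a2 = (et ^ 2*\<rho>*a2)/2" by simp
  have f2: "E2 \<le> Z - 2*(et*c*P1) - 2*(et*P2) + et ^ 2*\<rho>*a2" using assms(2) by (simp add: algebra_simps)
  have f3: "et*c*P1 \<ge> A*Fy - A*Fx" using 2 by (simp add: assms(10) right_diff_distrib)
  have f4: "et*P2 \<ge> et*Fy - et*f" using 3 by (simp add: right_diff_distrib)
  have e5: "(A' - et - et*c)*(Fy - f) = A'*Fy - A'*f - et*Fy + et*f - A*Fy + A*f"
    by (simp add: algebra_simps flip: assms(10))
  have f5: "A'*Fy - A'*f - et*Fy + et*f - A*Fy + A*f \<le> 0" using 4 unfolding e5 .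
  have g: "A'*(EF - f) = A'*EF - A'*f" "A*(Fx - f) = A*Fx - A*f" by (simp_all add: right_diff_distrib)
  have f12: "A'*EF \<le> A'*Fy - (et ^ 2*\<rho>*a2)/2" using f1 unfolding f1' .
  show ?thesis unfolding g using f12 f2 f3 f4 f5 by linarith
qed

lemma alg2:
  fixes EF E2 Fy Fx f ss L \<rho> a2 Z Y W et b P1 P2 PW \<mu> q \<beta> :: real
  assumes "EF \<le> Fy - ss*a2 + L/2* ss^2*\<rho>*a2" "E2 \<le> W - 2*et*PW + et ^ 2*\<rho>*a2"
    "W \<le> \<beta>*Z + q*Y" "PW = b*P1 + P2"
    "P2 \<ge> Fy - f + \<mu>/2*Y" "P1 \<ge> Fy - Fx" "\<mu> \<ge> 0" "\<beta> \<ge> 0" "q \<ge> 0"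
    "\<mu>/2*et ^ 2*\<rho> = ss - L/2* ss^2*\<rho>" "\<mu>*et = q" "q*b = \<beta>" "\<beta> = 1 - q"
  shows "EF - f + \<mu>/2*E2 \<le> \<beta>*(Fx - f + \<mu>/2*Z)"
proof -
  have 1: "\<mu>/2*E2 \<le> \<mu>/2*(W - 2*et*PW + et ^ 2*\<rho>*a2)" using assms by (intro mult_left_mono) auto
  have 2: "\<mu>/2*W \<le> \<mu>/2*(\<beta>*Z + q*Y)" using assms by (intro mult_left_mono) auto
  have 3: "\<mu>*et*PW = \<beta>*P1 + q*P2"
  proof -
    have "\<mu>*et*PW = (\<mu>*et)*b*P1 + (\<mu>*et)*P2" using assms(4) by (simp add: algebra_simps)
    also have "\<dots> = (q*b)*P1 + q*P2" using assms(11) by simp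
    finally show ?thesis using assms(12) by simp
  qed
  have 4: "\<beta>*P1 \<ge> \<beta>*(Fy - Fx)" using assms by (intro mult_left_mono) auto
  have 5: "q*P2 \<ge> q*(Fy - f + \<mu>/2*Y)" using assms by (intro mult_left_mono) auto
  have 6: "\<mu>/2*(et ^ 2*\<rho>*a2) = (ss - L/2* ss^2*\<rho>)*a2" 
  proof -
    have "\<mu>/2*(et ^ 2*\<rho>*a2) = (\<mu>/2*et ^ 2*\<rho>)*a2" by (simp add: algebra_simps)
    then show ?thesis using assms(10) by (simp only:)
  qed
  have 7: "\<mu>/2*(W - 2*et*PW + et ^ 2*\<rho>*a2) = \<mu>/2*W - \<mu>*et*PW + \<mu>/2*(et ^ 2*\<rho>*a2)"
    by (simp add: algebra_simps)
  have g1: "(ss - L/2* ss^2*\<rho>)*a2 = ss*a2 - L/2* ss^2*\<rho>*a2" by (simp add: left_diff_distrib)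
  have g2: "\<mu>/2*(\<beta>*Z + q*Y) = \<beta>*(\<mu>/2*Z) + q*(\<mu>/2*Y)" by (simp add: algebra_simps)
  have g3: "\<beta>*(Fy - Fx) = \<beta>*Fy - \<beta>*Fx" "q*(Fy - f + \<mu>/2*Y) = q*Fy - q*f + q*(\<mu>/2*Y)"
    "\<beta>*(Fx - f + \<mu>/2*Z) = \<beta>*Fx - \<beta>*f + \<beta>*(\<mu>/2*Z)" by (simp_all add: algebra_simps)
  have g4: "\<beta>*Fy + q*Fy = Fy" "\<beta>*f + q*f = f" using assms(13) by (simp_all flip: distrib_right)
  have h1: "\<mu>/2*E2 \<le> \<mu>/2*W - \<mu>*et*PW + \<mu>/2*(et ^ 2*\<rho>*a2)" using 1 unfolding 7 .
  have h2: "\<mu>/2*W \<le> \<beta>*(\<mu>/2*Z) + q*(\<mu>/2*Y)" using 2 unfolding g2 .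
  have h4: "\<beta>*P1 \<ge> \<beta>*Fy - \<beta>*Fx" using 4 unfolding g3(1) .
  have h5: "q*P2 \<ge> q*Fy - q*f + q*(\<mu>/2*Y)" using 5 unfolding g3(2) .
  have h6: "\<mu>/2*(et ^ 2*\<rho>*a2) = ss*a2 - L/2* ss^2*\<rho>*a2" using 6 unfolding g1 .
  show ?thesis unfolding g3(3) using h1 h2 3 h4 h5 h6 g4 assms(1) by linarith
qed



lemma E_lin:
  fixes Q :: "'b pmf" and f h :: "'b \<Rightarrow> real"
  assumes "finite (set_pmf Q)"
  shows "measure_pmf.expectation Q (\<lambda>B. a * (f B - c) + b * h B)
       = a * (measure_pmf.expectation Q f - c) + b * measure_pmf.expectation Q h"
proof -
  have i: "integrable (measure_pmf Q) u" for u :: "'b \<Rightarrow> real" by (rule integrable_measure_pmf_finite[OF assms])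
  have "measure_pmf.expectation Q (\<lambda>B. a * (f B - c) + b * h B)
      = measure_pmf.expectation Q (\<lambda>B. a * f B) - measure_pmf.expectation Q (\<lambda>B. a * c) + measure_pmf.expectation Q (\<lambda>B. b * h B)"
    by (simp add: i algebra_simps)
  then show ?thesis by (simp add: algebra_simps)
qed

lemma part1:
  fixes N K :: nat and fs :: "nat \<Rightarrow> 'a::euclidean_space \<Rightarrow> real"
    and g :: "nat \<Rightarrow> 'a \<Rightarrow> 'a" and L \<rho> \<epsilon> fstar :: real and x0 xstar :: 'a
  assumes K: "1 \<le> K" "K \<le> N"
    and D: "\<And>x. (favg N fs has_derivative (\<lambda>h. gavg N g x \<bullet> h)) (at x)"
    and fstar_min: "\<And>x. fstar \<le> favg N fs x"
    and Lpos: "L > 0"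
    and smooth: "\<And>x y. norm (gavg N g x - gavg N g y) \<le> L * norm (x - y)"
    and rho: "\<rho> \<ge> 1"
    and SGC: "\<And>x. measure_pmf.expectation (pmf_of_set (batches N K)) (\<lambda>B. (norm (sgrad K g B x))\<^sup>2)
                  \<le> \<rho> * (norm (gavg N g x))\<^sup>2"
    and eps: "\<epsilon> > 0"
    and cvx: "convex_on UNIV (favg N fs)" and xs: "favg N fs xstar = fstar"
    and nb: "real n \<ge> \<rho> * sqrt (2 * L / \<epsilon>) * norm (x0 - xstar)"
  shows "measure_pmf.expectation
            (snag_pmf N K g (1 / (L * \<rho>)) 1
               (\<lambda>n. (real n ^ 2 / (real n + 1)) / (2 + real n ^ 2 / (real n + 1)))
               (\<lambda>n. 1 / (L * \<rho> ^ 2) * ((real n + 1) / 2)) x0 n)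
            (\<lambda>st. favg N fs (fst st) - fstar) \<le> \<epsilon>"
proof -
  define F where "F = favg N fs"
  define G where "G = gavg N g"
  define s where "s = 1 / (L * \<rho>)"
  define al where "al = (\<lambda>n::nat. (real n ^ 2 / (real n + 1)) / (2 + real n ^ 2 / (real n + 1)))"
  define et where "et = (\<lambda>n::nat. 1 / (L * \<rho> ^ 2) * ((real n + 1) / 2))"
  define P where "P = snag_pmf N K g s 1 al et x0"
  define Q where "Q = pmf_of_set (batches N K)"
  define A where "A = (\<lambda>k::nat. real k ^ 2 / (4 * L * \<rho>^2))"
  define V where "V = (\<lambda>k st. A k * (F (fst st) - fstar) + 1/2 * (norm (snd st - xstar))^2)"
  have rpos: "\<rho> > 0" using rho by simp
  have fin: "finite (batches N K)" by (rule batches_finite)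
  have ne: "batches N K \<noteq> {}" using K by (intro batches_ne) auto
  have Qfin: "finite (set_pmf Q)" unfolding Q_def using fin ne by simp
  have Vnn: "0 \<le> V k st" for k st
    unfolding V_def A_def F_def using fstar_min[of "fst st"] Lpos rpos by (intro add_nonneg_nonneg mult_nonneg_nonneg) auto
  have dec: "measure_pmf.expectation Q (\<lambda>B. V (Suc k) (snag_step K g s 1 al et k st B)) \<le> 1 * V k st" for k st
  proof -
    obtain x z where st: "st = (x, z)" by (cases st)
    define a where "a = real k ^ 2 / (real k + 1)"
    define c where "c = a / 2"
    define y where "y = al k *\<^sub>R x + (1 - al k) *\<^sub>R z"
    let ?v = "\<lambda>B. sgrad K g B y"
    have a0: "a \<ge> 0" unfolding a_def by simp
    have alk: "al k = a / (2 + a)" unfolding al_def a_def by simp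
    have step: "snag_step K g s 1 al et k st B = (y - s *\<^sub>R ?v B, z - et k *\<^sub>R ?v B)" for B
      unfolding snag_step_def st y_def by (simp add: Let_def)
    have EV: "measure_pmf.expectation Q (\<lambda>B. V (Suc k) (snag_step K g s 1 al et k st B))
       = A (Suc k) * (measure_pmf.expectation Q (\<lambda>B. F (y - s *\<^sub>R ?v B)) - fstar)
         + 1/2 * measure_pmf.expectation Q (\<lambda>B. (norm (z - et k *\<^sub>R ?v B - xstar))^2)"
      unfolding step V_def prod.sel by (rule E_lin[OF Qfin])
    have E1: "measure_pmf.expectation Q (\<lambda>B. F (y - s *\<^sub>R ?v B))
           \<le> F y - s * (norm (G y))^2 + L/2 * s^2 * \<rho> * (norm (G y))^2"
      unfolding Q_def F_def G_def by (rule step_avg(1)[OF K D smooth _ SGC]) (use Lpos in auto)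
    have E2: "measure_pmf.expectation Q (\<lambda>B. (norm (z - et k *\<^sub>R ?v B - xstar))^2)
           \<le> (norm (z - xstar))^2 - 2 * et k * ((z - xstar) \<bullet> G y) + (et k)^2 * \<rho> * (norm (G y))^2"
      unfolding Q_def F_def G_def by (rule step_avg(2)[OF K D smooth _ SGC]) (use Lpos in auto)
    have yx: "y - x = (1 - al k) *\<^sub>R (z - x)" unfolding y_def by (simp add: algebra_simps)
    have zy: "z - y = al k *\<^sub>R (z - x)" unfolding y_def by (simp add: algebra_simps)
    have cal: "c * (1 - al k) = al k" unfolding alk c_def using a0 by (simp add: field_simps)
    have "c *\<^sub>R (y - x) = z - y" unfolding yx zy using cal by simp
    then have zdec: "z - xstar = c *\<^sub>R (y - x) + (y - xstar)" by (simp add: algebra_simps)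
    have Pz: "(z - xstar) \<bullet> G y = c * ((y - x) \<bullet> G y) + (y - xstar) \<bullet> G y"
      unfolding zdec by (simp add: inner_add_left)
    have C1: "(y - xstar) \<bullet> G y \<ge> F y - fstar"
      using convex_tangent[OF cvx D, where x=xstar and y=y] xs unfolding F_def G_def
      by (simp add: inner_diff_right inner_diff_left inner_commute)
    have C2: "(y - x) \<bullet> G y \<ge> F y - F x"
      using convex_tangent[OF cvx D, where x=x and y=y] unfolding F_def G_def
      by (simp add: inner_diff_right inner_diff_left inner_commute)
    have kp: "real k + 1 > 0" by simp
    have kp': "real k + 1 \<noteq> 0" "1 + real k \<noteq> 0" by simp_all
    have ids1: "A (Suc k) * (s - L/2* s^2*\<rho>) = (et k) ^ 2*\<rho>/2"
      unfolding A_def s_def et_def using Lpos rpos by (simp add: field_simps power2_eq_square)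
    have ids2: "et k * c = A k"
    proof -
      have h: "(real k + 1) / 2 * (real k ^ 2 / (real k + 1) / 2) = real k ^ 2 / 4"
        using kp' by (simp add: field_simps)
      have "et k * c = 1 / (L * \<rho> ^ 2) * ((real k + 1) / 2 * (real k ^ 2 / (real k + 1) / 2))"
        unfolding et_def c_def a_def by (simp only: mult.assoc)
      also have "\<dots> = A k" unfolding h A_def using Lpos rpos by (simp add: field_simps)
      finally show ?thesis .
    qed
    have ids3: "A (Suc k) \<le> et k + et k * c"
      unfolding ids2 unfolding A_def et_def using Lpos rpos kp by (simp add: field_simps power2_eq_square)
    note ids = ids1 ids2 ids3
    have "A (Suc k) * (measure_pmf.expectation Q (\<lambda>B. F (y - s *\<^sub>R ?v B)) - fstar)
         + 1/2 * measure_pmf.expectation Q (\<lambda>B. (norm (z - et k *\<^sub>R ?v B - xstar))^2)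
         \<le> A k * (F x - fstar) + 1/2 * (norm (z - xstar))^2"
      apply (rule alg1[OF E1 E2[unfolded Pz] _ C2 _ _ _ _ ids])
      using C1 fstar_min[of y] Lpos rpos a0 unfolding A_def et_def c_def F_def
      by (auto intro!: divide_nonneg_pos)
    then show ?thesis by (subst EV) (simp add: V_def st)
  qed
  have P0: "P 0 = return_pmf (x0, x0)" unfolding P_def by simp
  have PS: "P (Suc k) = bind_pmf (P k) (\<lambda>st. map_pmf (snag_step K g s 1 al et k st) Q)" for k
    unfolding P_def Q_def by simp
  have IB: "finite (set_pmf (P n)) \<and> measure_pmf.expectation (P n) (V n) \<le> 1^n * V 0 (x0, x0)"
    by (rule iter_bound[OF P0 PS Qfin Vnn dec]) simp
  have finP: "finite (set_pmf (P n))" using IB by blast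
  have EVn: "measure_pmf.expectation (P n) (V n) \<le> 1/2 * (norm (x0 - xstar))^2"
    using IB unfolding V_def A_def by simp
  show ?thesis
  proof (cases "n = 0")
    case True
    have "sqrt (2 * L / \<epsilon>) > 0" using Lpos eps by simp
    then have "norm (x0 - xstar) \<le> 0" using nb True rpos
      by (metis mult_pos_pos mult_le_0_iff not_le of_nat_0 norm_ge_zero order.trans)
    then have "x0 = xstar" by simp
    then show ?thesis using True xs eps by simp
  next
    case False
    have An: "A n > 0" unfolding A_def using False Lpos rpos by simp
    have "A n * measure_pmf.expectation (P n) (\<lambda>st. F (fst st) - fstar)
        = measure_pmf.expectation (P n) (\<lambda>st. A n * (F (fst st) - fstar))" by simp
    also have "\<dots> \<le> measure_pmf.expectation (P n) (V n)"
      by (rule integral_mono) (auto intro!: integrable_measure_pmf_finite[OF finP] simp: V_def)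
    also have "\<dots> \<le> 1/2 * (norm (x0 - xstar))^2" by (rule EVn)
    also have "\<dots> \<le> A n * \<epsilon>"
    proof -
      have "(\<rho> * sqrt (2 * L / \<epsilon>) * norm (x0 - xstar))^2 \<le> (real n)^2"
        using nb by (intro power_mono) (use Lpos eps rpos in auto)
      then have "\<rho>^2 * (2 * L / \<epsilon>) * (norm (x0 - xstar))^2 \<le> (real n)^2"
        using Lpos eps by (simp add: power_mult_distrib)
      then show ?thesis unfolding A_def using Lpos eps rpos by (simp add: field_simps)
    qed
    finally have "A n * measure_pmf.expectation (P n) (\<lambda>st. F (fst st) - fstar) \<le> A n * \<epsilon>" .
    then have "measure_pmf.expectation (P n) (\<lambda>st. F (fst st) - fstar) \<le> \<epsilon>" using An by simp
    then show ?thesis unfolding P_def F_def s_def al_def et_def .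
  qed
qed



lemma part2:
  fixes N K :: nat and fs :: "nat \<Rightarrow> 'a::euclidean_space \<Rightarrow> real"
    and g :: "nat \<Rightarrow> 'a \<Rightarrow> 'a" and L \<rho> \<epsilon> fstar \<mu> :: real and x0 :: 'a
  assumes K: "1 \<le> K" "K \<le> N"
    and D: "\<And>x. (favg N fs has_derivative (\<lambda>h. gavg N g x \<bullet> h)) (at x)"
    and fstar_min: "\<And>x. fstar \<le> favg N fs x"
    and fstar_att: "\<exists>x. favg N fs x = fstar"
    and Lpos: "L > 0"
    and smooth: "\<And>x y. norm (gavg N g x - gavg N g y) \<le> L * norm (x - y)"
    and rho: "\<rho> \<ge> 1"
    and SGC: "\<And>x. measure_pmf.expectation (pmf_of_set (batches N K)) (\<lambda>B. (norm (sgrad K g B x))\<^sup>2)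
                  \<le> \<rho> * (norm (gavg N g x))\<^sup>2"
    and eps: "\<epsilon> > 0"
    and mu: "\<mu> > 0" and sc: "strongly_convex \<mu> (favg N fs)"
    and nb: "real n \<ge> \<rho> * sqrt (L / \<mu>) * ln (2 * (favg N fs x0 - fstar) / \<epsilon>)"
  shows "measure_pmf.expectation
            (snag_pmf N K g (1 / (L * \<rho>)) (1 - 1 / \<rho> * sqrt (\<mu> / L))
               (\<lambda>n. 1 / (1 + 1 / \<rho> * sqrt (\<mu> / L)))
               (\<lambda>n. 1 / (\<rho> * sqrt (\<mu> * L))) x0 n)
            (\<lambda>st. favg N fs (fst st) - fstar) \<le> \<epsilon>"
proof -
  define F where "F = favg N fs"
  define G where "G = gavg N g"
  define s where "s = 1 / (L * \<rho>)"
  define q where "q = 1 / \<rho> * sqrt (\<mu> / L)"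
  define \<beta> where "\<beta> = 1 - q"
  define al where "al = (\<lambda>n::nat. 1 / (1 + q))"
  define et where "et = (\<lambda>n::nat. 1 / (\<rho> * sqrt (\<mu> * L)))"
  define P where "P = snag_pmf N K g s \<beta> al et x0"
  define Q where "Q = pmf_of_set (batches N K)"
  obtain xstar where xs: "F xstar = fstar" using fstar_att unfolding F_def by blast
  define V where "V = (\<lambda>(k::nat) st. F (fst st) - fstar + \<mu>/2 * (norm (snd st - xstar))^2)"
  have DF: "\<And>x. (F has_derivative (\<lambda>h. G x \<bullet> h)) (at x)" unfolding F_def G_def by (rule D)
  have smoothG: "\<And>x y. norm (G x - G y) \<le> L * norm (x - y)" unfolding G_def by (rule smooth)
  have scF: "strongly_convex \<mu> F" unfolding F_def by (rule sc)
  have rpos: "\<rho> > 0" using rho by simp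
  obtain m l where ml: "m > 0" "l > 0" "\<mu> = m^2" "L = l^2" "sqrt \<mu> = m" "sqrt L = l"
    using mu Lpos by (metis real_sqrt_gt_0_iff real_sqrt_pow2 less_le)
  have sq1: "sqrt (\<mu> / L) = m / l" using ml by (simp add: real_sqrt_divide)
  have sq2: "sqrt (\<mu> * L) = m * l" using ml by (simp add: real_sqrt_mult)
  have sq3: "sqrt (L / \<mu>) = l / m" using ml by (simp add: real_sqrt_divide)
  have muL: "\<mu> \<le> L"
  proof -
    obtain e :: 'a where e: "e \<in> Basis" using nonempty_Basis by blast
    have "F e \<ge> F 0 + G 0 \<bullet> (e - 0) + \<mu>/2 * (norm (e - 0))^2" by (rule sc_tangent[OF scF DF])
    moreover have "F (0 + e) \<le> F 0 + G 0 \<bullet> e + L/2 * (norm e)^2" by (rule descent[OF DF smoothG])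
    ultimately show ?thesis using e by simp
  qed
  have ml_le: "m \<le> l" using muL ml by (metis power2_le_imp_le less_le)
  have qpos: "q > 0" unfolding q_def sq1 using ml rpos by simp
  have qle: "q \<le> 1"
  proof -
    have "m / l \<le> 1" using ml ml_le by simp
    moreover have "1 / \<rho> \<le> 1" using rho by simp
    ultimately have "1 / \<rho> * (m / l) \<le> 1 * 1"
      by (intro mult_mono) (use ml rpos in auto)
    then show ?thesis unfolding q_def sq1 by simp
  qed
  have b0: "\<beta> \<ge> 0" unfolding \<beta>_def using qle by simp
  have G0: "G xstar = 0"
  proof -
    define u where "u = G xstar"
    have d: "F (xstar + (- (1/L) *\<^sub>R u)) \<le> F xstar + G xstar \<bullet> (- (1/L) *\<^sub>R u) + L/2 * (norm (- (1/L) *\<^sub>R u))^2"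
      by (rule descent[OF DF smoothG])
    have m: "fstar \<le> F (xstar + (- (1/L) *\<^sub>R u))" unfolding F_def by (rule fstar_min)
    have e1: "G xstar \<bullet> (- (1/L) *\<^sub>R u) = - (1/L) * (norm u)^2"
      unfolding u_def by (simp add: power2_norm_eq_inner)
    have e2: "(norm (- (1/L) *\<^sub>R u))^2 = (1/L)^2 * (norm u)^2"
      using Lpos by (simp add: power_mult_distrib power_divide)
    have "fstar \<le> fstar + - (1/L) * (norm u)^2 + L/2 * ((1/L)^2 * (norm u)^2)"
      using d m unfolding e1 e2 xs by linarith
    then have "0 \<le> - (1/L) * (norm u)^2 + L/2 * ((1/L)^2 * (norm u)^2)" by linarith
    also have "\<dots> = - (1/(2*L)) * (norm u)^2"
      using Lpos by (simp add: field_simps power2_eq_square)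
    finally have h: "0 \<le> - (1/(2*L)) * (norm u)^2" .
    have "(norm u)^2 \<le> 0"
    proof (rule ccontr)
      assume "\<not> (norm u)^2 \<le> 0"
      then have "(norm u)^2 > 0" by simp
      moreover have "1/(2*L) > 0" using Lpos by simp
      ultimately have "(1/(2*L)) * (norm u)^2 > 0" by simp
      then show False using h by simp
    qed
    then show ?thesis unfolding u_def by simp
  qed
  have fin: "finite (batches N K)" by (rule batches_finite)
  have ne: "batches N K \<noteq> {}" using K by (intro batches_ne) auto
  have Qfin: "finite (set_pmf Q)" unfolding Q_def using fin ne by simp
  have Vnn: "0 \<le> V k st" for k st
    unfolding V_def F_def using fstar_min[of "fst st"] mu by (auto intro!: add_nonneg_nonneg)
  have dec: "measure_pmf.expectation Q (\<lambda>B. V (Suc k) (snag_step K g s \<beta> al et k st B)) \<le> \<beta> * V k st" for k st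
  proof -
    obtain x z where st: "st = (x, z)" by (cases st)
    define y where "y = al k *\<^sub>R x + (1 - al k) *\<^sub>R z"
    define w where "w = \<beta> *\<^sub>R z + (1 - \<beta>) *\<^sub>R y"
    define b where "b = \<beta> / q"
    let ?v = "\<lambda>B. sgrad K g B y"
    have step: "snag_step K g s \<beta> al et k st B = (y - s *\<^sub>R ?v B, w - et k *\<^sub>R ?v B)" for B
      unfolding snag_step_def st y_def w_def by (simp add: Let_def)
    have EV: "measure_pmf.expectation Q (\<lambda>B. V (Suc k) (snag_step K g s \<beta> al et k st B))
       = 1 * (measure_pmf.expectation Q (\<lambda>B. F (y - s *\<^sub>R ?v B)) - fstar)
         + \<mu>/2 * measure_pmf.expectation Q (\<lambda>B. (norm (w - et k *\<^sub>R ?v B - xstar))^2)"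
    proof -
      have "(\<lambda>B. V (Suc k) (snag_step K g s \<beta> al et k st B))
          = (\<lambda>B. 1 * (F (y - s *\<^sub>R ?v B) - fstar) + \<mu>/2 * (norm (w - et k *\<^sub>R ?v B - xstar))^2)"
        by (simp add: step V_def fun_eq_iff)
      then show ?thesis by (simp only:) (rule E_lin[OF Qfin])
    qed
    have E1: "measure_pmf.expectation Q (\<lambda>B. F (y - s *\<^sub>R ?v B))
           \<le> F y - s * (norm (G y))^2 + L/2 * s^2 * \<rho> * (norm (G y))^2"
      unfolding Q_def F_def G_def by (rule step_avg(1)[OF K D smooth _ SGC]) (use Lpos in auto)
    have E2: "measure_pmf.expectation Q (\<lambda>B. (norm (w - et k *\<^sub>R ?v B - xstar))^2)
           \<le> (norm (w - xstar))^2 - 2 * et k * ((w - xstar) \<bullet> G y) + (et k)^2 * \<rho> * (norm (G y))^2"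
      unfolding Q_def F_def G_def by (rule step_avg(2)[OF K D smooth _ SGC]) (use Lpos in auto)
    have yx: "y - x = (1 - al k) *\<^sub>R (z - x)" unfolding y_def by (simp add: algebra_simps)
    have zy: "z - y = al k *\<^sub>R (z - x)" unfolding y_def by (simp add: algebra_simps)
    have cal: "(1 / q) * (1 - al k) = al k" unfolding al_def using qpos by (simp add: field_simps)
    have zy2: "z - y = (1 / q) *\<^sub>R (y - x)" unfolding yx zy using cal by simp
    have "w - xstar = \<beta> *\<^sub>R (z - y) + (y - xstar)" unfolding w_def by (simp add: algebra_simps)
    also have "\<beta> *\<^sub>R (z - y) = b *\<^sub>R (y - x)" unfolding zy2 b_def by simp
    finally have wdec: "w - xstar = b *\<^sub>R (y - x) + (y - xstar)" .
    have PW: "(w - xstar) \<bullet> G y = b * ((y - x) \<bullet> G y) + (y - xstar) \<bullet> G y"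
      unfolding wdec by (simp add: inner_add_left)
    have Wb: "(norm (w - xstar))^2 \<le> \<beta> * (norm (z - xstar))^2 + q * (norm (y - xstar))^2"
    proof -
      have "w - xstar = (1 - q) *\<^sub>R (z - xstar) + q *\<^sub>R (y - xstar)"
        unfolding w_def \<beta>_def by (simp add: algebra_simps)
      then have "(norm (w - xstar))^2 = (1 - q) * (norm (z - xstar))^2 + q * (norm (y - xstar))^2
                   - q * (1 - q) * (norm ((z - xstar) - (y - xstar)))^2"
        using norm_conv_identity[of q "z - xstar" "y - xstar"] by simp
      moreover have "q * (1 - q) * (norm ((z - xstar) - (y - xstar)))^2 \<ge> 0"
        using qpos qle by simp
      ultimately show ?thesis unfolding \<beta>_def by linarith
    qed
    have C1: "(y - xstar) \<bullet> G y \<ge> F y - fstar + \<mu>/2 * (norm (y - xstar))^2"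
      using sc_tangent[OF scF DF, where x=xstar and y=y] xs
      by (simp add: inner_diff_right inner_diff_left inner_commute norm_minus_commute)
    have C2: "(y - x) \<bullet> G y \<ge> F y - F x"
    proof -
      have "F x \<ge> F y + G y \<bullet> (x - y) + \<mu>/2 * (norm (x - y))^2" by (rule sc_tangent[OF scF DF])
      moreover have "\<mu>/2 * (norm (x - y))^2 \<ge> 0" using mu by simp
      moreover have "G y \<bullet> (x - y) = - ((y - x) \<bullet> G y)" by (simp add: inner_diff_right inner_diff_left inner_commute)
      ultimately show ?thesis by linarith
    qed
    have id1: "\<mu>/2 * (et k) ^ 2 * \<rho> = s - L/2 * s^2 * \<rho>"
      unfolding et_def s_def sq2 using ml rpos by (simp add: field_simps power2_eq_square)
    have id2: "\<mu> * et k = q"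
      unfolding et_def q_def sq1 sq2 using ml rpos by (simp add: field_simps power2_eq_square)
    have id3: "q * b = \<beta>" unfolding b_def using qpos by simp
    have "1 * (measure_pmf.expectation Q (\<lambda>B. F (y - s *\<^sub>R ?v B)) - fstar)
         + \<mu>/2 * measure_pmf.expectation Q (\<lambda>B. (norm (w - et k *\<^sub>R ?v B - xstar))^2)
         \<le> \<beta> * (F x - fstar + \<mu>/2 * (norm (z - xstar))^2)"
      using alg2[OF E1 E2 Wb PW C1 C2 _ b0 _ id1 id2 id3] mu qpos unfolding \<beta>_def by simp
    then show ?thesis by (subst EV) (simp add: V_def st)
  qed
  have P0: "P 0 = return_pmf (x0, x0)" unfolding P_def by simp
  have PS: "P (Suc k) = bind_pmf (P k) (\<lambda>st. map_pmf (snag_step K g s \<beta> al et k st) Q)" for k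
    unfolding P_def Q_def by simp
  have IB: "finite (set_pmf (P n)) \<and> measure_pmf.expectation (P n) (V n) \<le> \<beta>^n * V 0 (x0, x0)"
    by (rule iter_bound[OF P0 PS Qfin Vnn dec b0])
  have finP: "finite (set_pmf (P n))" using IB by blast
  define \<Delta> where "\<Delta> = F x0 - fstar"
  have D0: "\<Delta> \<ge> 0" unfolding \<Delta>_def F_def using fstar_min by simp
  have V0: "V 0 (x0, x0) \<le> 2 * \<Delta>"
  proof -
    have "F x0 \<ge> F xstar + G xstar \<bullet> (x0 - xstar) + \<mu>/2 * (norm (x0 - xstar))^2"
      by (rule sc_tangent[OF scF DF])
    then show ?thesis unfolding V_def \<Delta>_def using xs G0 by simp
  qed
  have "measure_pmf.expectation (P n) (\<lambda>st. F (fst st) - fstar) \<le> measure_pmf.expectation (P n) (V n)"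
    by (rule integral_mono) (auto intro!: integrable_measure_pmf_finite[OF finP] simp: V_def less_imp_le[OF mu])
  also have "\<dots> \<le> \<beta>^n * (2 * \<Delta>)"
    using IB V0 b0 by (meson order.trans mult_left_mono zero_le_power)
  also have "\<dots> \<le> \<epsilon>"
  proof (cases "\<Delta> = 0")
    case True then show ?thesis using eps by simp
  next
    case False
    then have Dp: "\<Delta> > 0" using D0 by simp
    have "\<beta> \<le> exp (- q)" unfolding \<beta>_def using exp_ge_add_one_self[of "- q"] by simp
    then have "\<beta>^n \<le> exp (- q) ^ n" using b0 by (intro power_mono) auto
    also have "\<dots> = exp (- (q * real n))" by (simp add: exp_of_nat_mult[symmetric] mult.commute)
    also have "\<dots> \<le> exp (- ln (2 * \<Delta> / \<epsilon>))"
    proof -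
      have inv: "\<rho> * sqrt (L / \<mu>) = 1 / q" unfolding q_def sq1 sq3 using ml rpos by simp
      have "q * real n \<ge> q * (\<rho> * sqrt (L / \<mu>) * ln (2 * \<Delta> / \<epsilon>))"
        using nb qpos unfolding \<Delta>_def F_def by (intro mult_left_mono) auto
      also have "q * (\<rho> * sqrt (L / \<mu>) * ln (2 * \<Delta> / \<epsilon>)) = ln (2 * \<Delta> / \<epsilon>)"
        unfolding inv using qpos by simp
      finally show ?thesis by simp
    qed
    also have "\<dots> = \<epsilon> / (2 * \<Delta>)" using Dp eps by (simp add: exp_minus ln_div exp_diff)
    finally have "\<beta>^n \<le> \<epsilon> / (2 * \<Delta>)" .
    then have "\<beta>^n * (2 * \<Delta>) \<le> \<epsilon> / (2 * \<Delta>) * (2 * \<Delta>)" using Dp by (intro mult_right_mono) auto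
    then show ?thesis using Dp by simp
  qed
  finally show ?thesis unfolding P_def F_def s_def \<beta>_def al_def et_def q_def .
qed


lemma favg_deriv:
  fixes fs :: "nat \<Rightarrow> 'a::real_inner \<Rightarrow> real" and g :: "nat \<Rightarrow> 'a \<Rightarrow> 'a"
  assumes deriv: "\<And>i x. i < N \<Longrightarrow> (fs i has_derivative (\<lambda>h. g i x \<bullet> h)) (at x)"
  shows "(favg N fs has_derivative (\<lambda>h. gavg N g x \<bullet> h)) (at x)"
proof -
  have "((\<lambda>x. \<Sum>i<N. fs i x) has_derivative (\<lambda>h. \<Sum>i<N. g i x \<bullet> h)) (at x)"
    by (rule has_derivative_sum) (use deriv in auto)
  then have "((\<lambda>x. (1 / real N) * (\<Sum>i<N. fs i x)) has_derivative (\<lambda>h. (1 / real N) * (\<Sum>i<N. g i x \<bullet> h))) (at x)"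
    by (rule has_derivative_mult_right)
  moreover have "favg N fs = (\<lambda>x. (1 / real N) * (\<Sum>i<N. fs i x))" by (rule ext) (simp add: favg_def)
  moreover have "(\<lambda>h. (1 / real N) * (\<Sum>i<N. g i x \<bullet> h)) = (\<lambda>h. gavg N g x \<bullet> h)"
    by (rule ext) (simp add: gavg_def inner_sum_left)
  ultimately show ?thesis by simp
qed

theorem theorem3:
  fixes N K :: nat and fs :: "nat \<Rightarrow> 'a::euclidean_space \<Rightarrow> real"
    and g :: "nat \<Rightarrow> 'a \<Rightarrow> 'a" and L \<rho> \<epsilon> fstar :: real and x0 :: 'a
  assumes N2: "N \<ge> 2" and K: "1 \<le> K" "K \<le> N"
    and deriv: "\<And>i x. i < N \<Longrightarrow> (fs i has_derivative (\<lambda>h. g i x \<bullet> h)) (at x)"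
    and cont: "\<And>i. i < N \<Longrightarrow> continuous_on UNIV (g i)"
    and fstar_min: "\<And>x. fstar \<le> favg N fs x"
    and fstar_att: "\<exists>x. favg N fs x = fstar"
    and Lpos: "L > 0"
    and smooth: "\<And>x y. norm (gavg N g x - gavg N g y) \<le> L * norm (x - y)"
    and rho: "\<rho> \<ge> 1"
    and SGC: "\<And>x. measure_pmf.expectation (pmf_of_set (batches N K)) (\<lambda>B. (norm (sgrad K g B x))\<^sup>2)
                  \<le> \<rho> * (norm (gavg N g x))\<^sup>2"
    and eps: "\<epsilon> > 0"
  shows
    "(\<forall>xstar. convex_on UNIV (favg N fs) \<and> favg N fs xstar = fstar \<longrightarrow>
       (\<forall>n::nat. real n \<ge> \<rho> * sqrt (2 * L / \<epsilon>) * norm (x0 - xstar) \<longrightarrow>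
          measure_pmf.expectation
            (snag_pmf N K g (1 / (L * \<rho>)) 1
               (\<lambda>n. (real n ^ 2 / (real n + 1)) / (2 + real n ^ 2 / (real n + 1)))
               (\<lambda>n. 1 / (L * \<rho> ^ 2) * ((real n + 1) / 2)) x0 n)
            (\<lambda>st. favg N fs (fst st) - fstar) \<le> \<epsilon>))
   \<and> (\<forall>\<mu>. \<mu> > 0 \<and> strongly_convex \<mu> (favg N fs) \<longrightarrow>
       (\<forall>n::nat. real n \<ge> \<rho> * sqrt (L / \<mu>) * ln (2 * (favg N fs x0 - fstar) / \<epsilon>) \<longrightarrow>
          measure_pmf.expectation
            (snag_pmf N K g (1 / (L * \<rho>)) (1 - 1 / \<rho> * sqrt (\<mu> / L))
               (\<lambda>n. 1 / (1 + 1 / \<rho> * sqrt (\<mu> / L)))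
               (\<lambda>n. 1 / (\<rho> * sqrt (\<mu> * L))) x0 n)
            (\<lambda>st. favg N fs (fst st) - fstar) \<le> \<epsilon>))"
  proof -
  have D: "\<And>x. (favg N fs has_derivative (\<lambda>h. gavg N g x \<bullet> h)) (at x)"
    by (rule favg_deriv) (rule deriv)
  show ?thesis
  proof (intro conjI allI impI)
    fix xstar n
    assume h: "convex_on UNIV (favg N fs) \<and> favg N fs xstar = fstar"
      and nb: "real n \<ge> \<rho> * sqrt (2 * L / \<epsilon>) * norm (x0 - xstar)"
    show "measure_pmf.expectation
            (snag_pmf N K g (1 / (L * \<rho>)) 1
               (\<lambda>n. (real n ^ 2 / (real n + 1)) / (2 + real n ^ 2 / (real n + 1)))
               (\<lambda>n. 1 / (L * \<rho> ^ 2) * ((real n + 1) / 2)) x0 n)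
            (\<lambda>st. favg N fs (fst st) - fstar) \<le> \<epsilon>"
      using h by (intro part1[OF K D fstar_min Lpos smooth rho SGC eps _ _ nb]) auto
  next
    fix \<mu> :: real and n :: nat
    assume h: "\<mu> > 0 \<and> strongly_convex \<mu> (favg N fs)"
      and nb: "real n \<ge> \<rho> * sqrt (L / \<mu>) * ln (2 * (favg N fs x0 - fstar) / \<epsilon>)"
    show "measure_pmf.expectation
            (snag_pmf N K g (1 / (L * \<rho>)) (1 - 1 / \<rho> * sqrt (\<mu> / L))
               (\<lambda>n. 1 / (1 + 1 / \<rho> * sqrt (\<mu> / L)))
               (\<lambda>n. 1 / (\<rho> * sqrt (\<mu> * L))) x0 n)
            (\<lambda>st. favg N fs (fst st) - fstar) \<le> \<epsilon>"
      using h by (intro part2[OF K D fstar_min fstar_att Lpos smooth rho SGC eps _ _ nb]) auto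
  qed
qed

end
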